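(* Let $\mu$ be a probability distribution on $\mathbb{R}^d$ and $X \sim \mu$. Let $\delta_1, \delta_2, \dots > 0$, let $N_1, N_2, \dots$ be i.i.d. standard Gaussian vectors in $\mathbb{R}^d$ independent of $X$, and define $Y_0 = 0$, $Y_k = Y_{k-1} + \delta_k X + \sqrt{\delta_k} N_k$ for $k \ge 1$. Then $(Y_k)_{k \ge 0}$ is a Markov chain. *)

theory Defs
  imports "HOL-Probability.Probability"
begin

definition gen_sigma :: "'a measure \<Rightarrow> (nat \<Rightarrow> 'a \<Rightarrow> 'b::topological_space) \<Rightarrow> nat set \<Rightarrow> 'a measure" where
  "gen_sigma M Y J = sigma (space M) (\<Union>j\<in>J. {Y j -` A \<inter> space M | A. A \<in> sets borel})"

definition markov_chain :: "'a measure \<Rightarrow> (nat \<Rightarrow> 'a \<Rightarrow> 'b::topological_space) \<Rightarrow> bool" where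
  "markov_chain M Y \<longleftrightarrow>
     (\<forall>k. Y k \<in> borel_measurable M) \<and>
     (\<forall>k. \<forall>A \<in> sets borel.
        AE \<omega> in M. real_cond_exp M (gen_sigma M Y {..k}) (indicator (Y (Suc k) -` A \<inter> space M)) \<omega>
                  = real_cond_exp M (gen_sigma M Y {k}) (indicator (Y (Suc k) -` A \<inter> space M)) \<omega>)"

definition std_gaussian_vector :: "'a measure \<Rightarrow> ('a \<Rightarrow> real ^ 'd) \<Rightarrow> bool" where
  "std_gaussian_vector M Z \<longleftrightarrow>
     distributed M lborel Z (\<lambda>x. ennreal (\<Prod>i\<in>UNIV. std_normal_density (x $ i)))"

fun obs_chain :: "(nat \<Rightarrow> real) \<Rightarrow> ('a \<Rightarrow> real ^ 'd) \<Rightarrow> (nat \<Rightarrow> 'a \<Rightarrow> real ^ 'd) \<Rightarrow> nat \<Rightarrow> 'a \<Rightarrow> real ^ 'd" where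
  "obs_chain \<delta> X N 0 \<omega> = 0"
| "obs_chain \<delta> X N (Suc k) \<omega> =
     obs_chain \<delta> X N k \<omega> + \<delta> (Suc k) *\<^sub>R X \<omega> + sqrt (\<delta> (Suc k)) *\<^sub>R N (Suc k) \<omega>"

end

theory Submission
  imports Defs
begin

lemma nd_scale:
  fixes c y :: real assumes c: "c > 0"
  shows "c * normal_density 0 c (c * y) = normal_density 0 1 y"
proof -
  have "sqrt (2 * pi * c\<^sup>2) = c * sqrt (2 * pi)"
    using c by (simp add: real_sqrt_mult mult.commute)
  moreover have "- (c * y)\<^sup>2 / (2 * c\<^sup>2) = - y\<^sup>2 / 2" using c by (simp add: power_mult_distrib)
  ultimately show ?thesis using c unfolding normal_density_def by simp
qed

lemma t1:
  fixes a b s v :: real assumes a: "a > 0" and b: "b > 0"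
  shows "-(s - v)\<^sup>2 / (2 * a) + - v\<^sup>2 / (2 * b) = - s\<^sup>2 / (2 * (a + b)) + - (b * s - (a + b) * v)\<^sup>2 / (2 * (a * b * (a + b)))"
proof -
  have ab: "a + b > 0" using a b by simp
  have "-(s - v)\<^sup>2 / (2 * a) + - v\<^sup>2 / (2 * b) = - (((s - v)\<^sup>2 * b + v\<^sup>2 * a) * (a + b)) / (2 * a * b * (a + b))"
    using a b ab by (simp add: divide_simps; simp add: algebra_simps)
  also have "((s - v)\<^sup>2 * b + v\<^sup>2 * a) * (a + b) = s\<^sup>2 * (a * b) + (b * s - (a + b) * v)\<^sup>2"
    by algebra
  also have "- (s\<^sup>2 * (a * b) + (b * s - (a + b) * v)\<^sup>2) / (2 * a * b * (a + b)) = - s\<^sup>2 / (2 * (a + b)) + - (b * s - (a + b) * v)\<^sup>2 / (2 * (a * b * (a + b)))"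
    using a b ab by (simp add: divide_simps; simp add: algebra_simps)
  finally show ?thesis .
qed

lemma nd_conv:
  fixes a b s v :: real assumes a: "a > 0" and b: "b > 0"
  shows "normal_density 0 (sqrt a) (s - v) * normal_density 0 (sqrt b) v =
    normal_density 0 (sqrt (a + b)) s * ((a + b) * normal_density 0 (sqrt (a * b * (a + b))) (b * s - (a + b) * v))"
proof -
  have e: "-(s - v)\<^sup>2 / (2 * a) + - v\<^sup>2 / (2 * b) = - s\<^sup>2 / (2 * (a + b)) + - (b * s - (a + b) * v)\<^sup>2 / (2 * (a * b * (a + b)))"
    by (rule t1[OF a b])
  have c1: "sqrt (2 * pi * a) * sqrt (2 * pi * b) = 2 * pi * sqrt (a * b)"
    using a b by (simp add: real_sqrt_mult[symmetric] algebra_simps) (simp add: real_sqrt_mult)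
  have c2: "sqrt (2 * pi * (a + b)) * sqrt (2 * pi * (a * b * (a + b))) = (a + b) * (2 * pi * sqrt (a * b))"
  proof -
    have "sqrt (2 * pi * (a + b)) * sqrt (2 * pi * (a * b * (a + b))) = sqrt ((2 * pi * (a + b))\<^sup>2 * (a * b))"
      by (simp add: real_sqrt_mult[symmetric] power2_eq_square algebra_simps)
    also have "\<dots> = (2 * pi * (a + b)) * sqrt (a * b)" using a b by (simp add: real_sqrt_mult)
    finally show ?thesis by simp
  qed
  have "normal_density 0 (sqrt a) (s - v) * normal_density 0 (sqrt b) v
     = exp (-(s - v)\<^sup>2 / (2 * a)) * exp (- v\<^sup>2 / (2 * b)) / (sqrt (2 * pi * a) * sqrt (2 * pi * b))"
    using a b by (simp add: normal_density_def)
  also have "\<dots> = exp (-(s - v)\<^sup>2 / (2 * a) + - v\<^sup>2 / (2 * b)) / (sqrt (2 * pi * a) * sqrt (2 * pi * b))"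
    by (simp only: mult_exp_exp)
  also have "\<dots> = exp (- s\<^sup>2 / (2 * (a + b)) + - (b * s - (a + b) * v)\<^sup>2 / (2 * (a * b * (a + b)))) / (2 * pi * sqrt (a * b))"
    using e c1 by simp
  also have "\<dots> = (a + b) * exp (- s\<^sup>2 / (2 * (a + b)) + - (b * s - (a + b) * v)\<^sup>2 / (2 * (a * b * (a + b)))) / (sqrt (2 * pi * (a + b)) * sqrt (2 * pi * (a * b * (a + b))))"
    using c2 a b by simp
  also have "\<dots> = (a + b) * (exp (- s\<^sup>2 / (2 * (a + b))) * exp (- (b * s - (a + b) * v)\<^sup>2 / (2 * (a * b * (a + b))))) / (sqrt (2 * pi * (a + b)) * sqrt (2 * pi * (a * b * (a + b))))"
    by (simp only: mult_exp_exp)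
  also have "\<dots> = normal_density 0 (sqrt (a + b)) s * ((a + b) * normal_density 0 (sqrt (a * b * (a + b))) (b * s - (a + b) * v))"
    using a b by (simp add: normal_density_def)
  finally show ?thesis .
qed


definition gd :: "real \<Rightarrow> real ^ 'd \<Rightarrow> real" where
  "gd c x = (\<Prod>i\<in>UNIV. normal_density 0 (sqrt c) (x $ i))"

lemma gd_nonneg: "gd c x \<ge> 0"
  unfolding gd_def by (intro prod_nonneg) (auto simp: normal_density_nonneg)

lemma vec_nth_borel[measurable]: "(\<lambda>x::real^'d. x $ i) \<in> borel_measurable borel"
  by (intro borel_measurable_continuous_onI continuous_intros)

lemma gd_measurable[measurable]: "gd c \<in> borel_measurable borel"
  unfolding gd_def by measurable

lemma gd_one: "gd 1 x = (\<Prod>i\<in>UNIV. std_normal_density (x $ i))"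
  unfolding gd_def by simp

lemma gd_scale:
  fixes x :: "real ^ 'd" assumes c: "c > 0"
  shows "c ^ CARD('d) * gd (c\<^sup>2) (c *\<^sub>R x) = gd 1 x"
proof -
  have "c ^ CARD('d) * gd (c\<^sup>2) (c *\<^sub>R x) = (\<Prod>i\<in>UNIV. c * normal_density 0 c (c * x $ i))"
    using c by (simp add: gd_def prod.distrib)
  also have "\<dots> = (\<Prod>i\<in>UNIV. normal_density 0 1 (x $ i))"
    using nd_scale[OF c] by simp
  finally show ?thesis by (simp add: gd_def)
qed

lemma gd_conv:
  fixes s v :: "real ^ 'd" assumes a: "a > 0" and b: "b > 0"
  shows "gd a (s - v) * gd b v = gd (a + b) s * ((a + b) ^ CARD('d) * gd (a * b * (a + b)) (b *\<^sub>R s - (a + b) *\<^sub>R v))"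
proof -
  have "gd a (s - v) * gd b v = (\<Prod>i\<in>UNIV. normal_density 0 (sqrt a) (s $ i - v $ i) * normal_density 0 (sqrt b) (v $ i))"
    by (simp add: gd_def prod.distrib)
  also have "\<dots> = (\<Prod>i\<in>UNIV. normal_density 0 (sqrt (a + b)) (s $ i) * ((a + b) * normal_density 0 (sqrt (a * b * (a + b))) (b * s $ i - (a + b) * v $ i)))"
    using nd_conv[OF a b] by simp
  also have "\<dots> = gd (a + b) s * ((a + b) ^ CARD('d) * gd (a * b * (a + b)) (b *\<^sub>R s - (a + b) *\<^sub>R v))"
    by (simp add: gd_def prod.distrib)
  finally show ?thesis .
qed

lemma nn_int_affine:
  fixes f :: "real ^ 'd \<Rightarrow> ennreal" and c :: real and t :: "real ^ 'd"
  assumes [measurable]: "f \<in> borel_measurable borel" and c: "c \<noteq> 0"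
  shows "(\<integral>\<^sup>+x. f x \<partial>lborel) = ennreal (\<bar>c\<bar> ^ CARD('d)) * (\<integral>\<^sup>+x. f (t + c *\<^sub>R x) \<partial>lborel)"
  apply (subst lborel_affine[OF c, of t])
  apply (simp add: nn_integral_density nn_integral_distr nn_integral_cmult)
  done


lemma gd_scale_distr:
  fixes Z :: "'a \<Rightarrow> real ^ 'd"
  assumes Z: "distributed M lborel Z (\<lambda>x. ennreal (gd 1 x))" and c: "c > 0"
  shows "distributed M lborel (\<lambda>\<omega>. c *\<^sub>R Z \<omega>) (\<lambda>x. ennreal (gd (c\<^sup>2) x))"
proof -
  have Zm[measurable]: "Z \<in> borel_measurable M" using Z by (simp add: distributed_def)
  have "distr M lborel (\<lambda>\<omega>. c *\<^sub>R Z \<omega>) = distr (distr M lborel Z) lborel (\<lambda>x. c *\<^sub>R x)"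
    by (subst distr_distr) (auto simp: comp_def)
  also have "\<dots> = distr (density lborel (\<lambda>x. ennreal (gd 1 x))) lborel (\<lambda>x. c *\<^sub>R x)"
    using Z by (simp add: distributed_def)
  also have "\<dots> = density lborel (\<lambda>x. ennreal (gd (c\<^sup>2) x))"
  proof (rule measure_eqI)
    fix A :: "(real ^ 'd) set" assume A: "A \<in> sets (distr (density lborel (\<lambda>x. ennreal (gd 1 x))) lborel (\<lambda>x. c *\<^sub>R x))"
    then have A[measurable]: "A \<in> sets borel" by simp
    have pre: "(\<lambda>x. c *\<^sub>R x) -` A \<in> sets lborel"
      using measurable_sets[of "\<lambda>x. c *\<^sub>R x" lborel borel A] by simp
    have "emeasure (distr (density lborel (\<lambda>x. ennreal (gd 1 x))) lborel (\<lambda>x. c *\<^sub>R x)) A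
        = (\<integral>\<^sup>+x. ennreal (gd 1 x) * indicator A (c *\<^sub>R x) \<partial>lborel)"
      using pre by (simp add: emeasure_distr emeasure_density indicator_vimage[symmetric] del: indicator_vimage)
    also have "\<dots> = (\<integral>\<^sup>+x. ennreal (c ^ CARD('d)) * (ennreal (gd (c\<^sup>2) (0 + c *\<^sub>R x)) * indicator A (0 + c *\<^sub>R x)) \<partial>lborel)"
    proof (intro nn_integral_cong)
      fix x :: "real ^ 'd"
      have "ennreal (c ^ CARD('d)) * ennreal (gd (c\<^sup>2) (c *\<^sub>R x)) = ennreal (gd 1 x)"
      proof -
        have "ennreal (c ^ CARD('d)) * ennreal (gd (c\<^sup>2) (c *\<^sub>R x)) = ennreal (c ^ CARD('d) * gd (c\<^sup>2) (c *\<^sub>R x))"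
          by (rule ennreal_mult[symmetric]) (use c gd_nonneg in auto)
        also have "\<dots> = ennreal (gd 1 x)" using gd_scale[OF c, of x] by simp
        finally show ?thesis .
      qed
      then show "ennreal (gd 1 x) * indicator A (c *\<^sub>R x) = ennreal (c ^ CARD('d)) * (ennreal (gd (c\<^sup>2) (0 + c *\<^sub>R x)) * indicator A (0 + c *\<^sub>R x))"
        by (simp add: mult.assoc[symmetric])
    qed
    also have "\<dots> = ennreal (\<bar>c\<bar> ^ CARD('d)) * (\<integral>\<^sup>+x. ennreal (gd (c\<^sup>2) (0 + c *\<^sub>R x)) * indicator A (0 + c *\<^sub>R x) \<partial>lborel)"
      using c by (subst nn_integral_cmult) auto
    also have "\<dots> = (\<integral>\<^sup>+x. ennreal (gd (c\<^sup>2) x) * indicator A x \<partial>lborel)"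
      using c by (intro nn_int_affine[symmetric]) auto
    also have "\<dots> = emeasure (density lborel (\<lambda>x. ennreal (gd (c\<^sup>2) x))) A"
      by (simp add: emeasure_density)
    finally show "emeasure (distr (density lborel (\<lambda>x. ennreal (gd 1 x))) lborel (\<lambda>x. c *\<^sub>R x)) A = emeasure (density lborel (\<lambda>x. ennreal (gd (c\<^sup>2) x))) A" .
  qed simp
  finally show ?thesis by (simp add: distributed_def)
qed


lemma (in prob_space) indep_var_lborel_iff:
  "indep_var lborel U lborel V \<longleftrightarrow> indep_var borel U borel V"
  by (simp add: indep_var_eq)

lemma Int_stable_vimage: "Int_stable {f -` A \<inter> S | A. A \<in> sets N}"
  unfolding Int_stable_def
proof (intro ballI)
  fix x y assume "x \<in> {f -` A \<inter> S | A. A \<in> sets N}" "y \<in> {f -` A \<inter> S | A. A \<in> sets N}"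
  then obtain A B where "x = f -` A \<inter> S" "A \<in> sets N" "y = f -` B \<inter> S" "B \<in> sets N" by auto
  then show "x \<inter> y \<in> {f -` A \<inter> S | A. A \<in> sets N}" by (intro CollectI exI[of _ "A \<inter> B"]) auto
qed

lemma (in prob_space) gauss_key:
  fixes U V :: "'a \<Rightarrow> real ^ 'd"
  assumes U: "distributed M lborel U (\<lambda>x. ennreal (gd a x))"
    and V: "distributed M lborel V (\<lambda>x. ennreal (gd b x))"
    and ind: "indep_var borel U borel V"
    and a: "a > 0" and b: "b > 0"
    and E[measurable]: "E \<in> sets borel" and F[measurable]: "F \<in> sets borel"
  shows "emeasure M {\<omega> \<in> space M. U \<omega> + V \<omega> \<in> E \<and> b *\<^sub>R U \<omega> - a *\<^sub>R V \<omega> \<in> F}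
    = (\<integral>\<^sup>+s. ennreal (gd (a + b) s) * indicator E s \<partial>lborel) * (\<integral>\<^sup>+w. ennreal (gd (a * b * (a + b)) w) * indicator F w \<partial>lborel)"
proof -
  define e where "e = a * b * (a + b)"
  have e: "e > 0" using a b by (simp add: e_def)
  have Um[measurable]: "U \<in> borel_measurable M" using U by (simp add: distributed_def)
  have Vm[measurable]: "V \<in> borel_measurable M" using V by (simp add: distributed_def)
  have J: "distributed M (lborel \<Otimes>\<^sub>M lborel) (\<lambda>x. (U x, V x)) (\<lambda>(x, y). ennreal (gd a x) * ennreal (gd b y))"
    using distributed_joint_indep[OF _ _ U V] ind by (simp add: indep_var_lborel_iff lborel.sigma_finite_measure_axioms)
  define T where "T = {(u :: real ^ 'd, v :: real ^ 'd). u + v \<in> E \<and> b *\<^sub>R u - a *\<^sub>R v \<in> F}"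
  have T[measurable]: "T \<in> sets (lborel \<Otimes>\<^sub>M lborel)"
  proof -
    have T_eq: "T = {x \<in> space (lborel \<Otimes>\<^sub>M lborel). (\<lambda>(u, v). u + v \<in> E \<and> b *\<^sub>R u - a *\<^sub>R v \<in> F) x}"
      unfolding T_def by (auto simp: space_pair_measure)
    show ?thesis unfolding T_eq by measurable
  qed
  have T2: "T \<in> sets (borel \<Otimes>\<^sub>M borel)"
    using T by (simp cong: sets_pair_measure_cong)
  define K where "K w = ennreal (gd e w) * indicator F w" for w :: "real ^ 'd"
  have K[measurable]: "K \<in> borel_measurable borel" unfolding K_def by measurable
  have "emeasure M {\<omega> \<in> space M. U \<omega> + V \<omega> \<in> E \<and> b *\<^sub>R U \<omega> - a *\<^sub>R V \<omega> \<in> F}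
      = emeasure M ((\<lambda>x. (U x, V x)) -` T \<inter> space M)"
    by (rule arg_cong[where f="emeasure M"]) (auto simp: T_def)
  also have "\<dots> = emeasure (distr M (lborel \<Otimes>\<^sub>M lborel) (\<lambda>x. (U x, V x))) T"
    using J T2 by (intro emeasure_distr[symmetric]) (auto simp: distributed_def)
  also have "\<dots> = emeasure (density (lborel \<Otimes>\<^sub>M lborel) (\<lambda>(x, y). ennreal (gd a x) * ennreal (gd b y))) T"
    using J by (simp add: distributed_def)
  also have "\<dots> = (\<integral>\<^sup>+z. (\<lambda>(x, y). ennreal (gd a x) * ennreal (gd b y)) z * indicator T z \<partial>(lborel \<Otimes>\<^sub>M lborel))"
    by (rule emeasure_density) (use J T2 in \<open>auto simp: distributed_def\<close>)
  also have "\<dots> = (\<integral>\<^sup>+v. \<integral>\<^sup>+u. ennreal (gd a u) * ennreal (gd b v) * indicator T (u, v) \<partial>lborel \<partial>lborel)"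
    by (subst lborel_pair.nn_integral_snd[symmetric]) (auto simp: case_prod_beta)
  also have "\<dots> = (\<integral>\<^sup>+v. \<integral>\<^sup>+s. ennreal (gd a (s - v)) * ennreal (gd b v) * indicator E s * indicator F (b *\<^sub>R s - (a + b) *\<^sub>R v) \<partial>lborel \<partial>lborel)"
  proof (rule nn_integral_cong)
    fix v :: "real ^ 'd"
    have "(\<integral>\<^sup>+u. ennreal (gd a u) * ennreal (gd b v) * indicator T (u, v) \<partial>lborel)
        = ennreal (\<bar>1\<bar> ^ CARD('d)) * (\<integral>\<^sup>+s. ennreal (gd a (- v + 1 *\<^sub>R s)) * ennreal (gd b v) * indicator T (- v + 1 *\<^sub>R s, v) \<partial>lborel)"
      by (rule nn_int_affine) auto
    also have "\<dots> = (\<integral>\<^sup>+s. ennreal (gd a (s - v)) * ennreal (gd b v) * indicator E s * indicator F (b *\<^sub>R s - (a + b) *\<^sub>R v) \<partial>lborel)"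
      by (auto intro!: nn_integral_cong simp: T_def indicator_def algebra_simps)
    finally show "(\<integral>\<^sup>+u. ennreal (gd a u) * ennreal (gd b v) * indicator T (u, v) \<partial>lborel) = (\<integral>\<^sup>+s. ennreal (gd a (s - v)) * ennreal (gd b v) * indicator E s * indicator F (b *\<^sub>R s - (a + b) *\<^sub>R v) \<partial>lborel)" .
  qed
  also have "\<dots> = (\<integral>\<^sup>+s. \<integral>\<^sup>+v. ennreal (gd a (s - v)) * ennreal (gd b v) * indicator E s * indicator F (b *\<^sub>R s - (a + b) *\<^sub>R v) \<partial>lborel \<partial>lborel)"
    by (rule lborel_pair.Fubini') measurable
  also have "\<dots> = (\<integral>\<^sup>+s. (ennreal (gd (a + b) s) * indicator E s) * (ennreal ((a + b) ^ CARD('d)) * (\<integral>\<^sup>+v. K (b *\<^sub>R s + (- (a + b)) *\<^sub>R v) \<partial>lborel)) \<partial>lborel)"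
  proof (rule nn_integral_cong)
    fix s :: "real ^ 'd"
    have "(\<integral>\<^sup>+v. ennreal (gd a (s - v)) * ennreal (gd b v) * indicator E s * indicator F (b *\<^sub>R s - (a + b) *\<^sub>R v) \<partial>lborel)
      = (\<integral>\<^sup>+v. (ennreal (gd (a + b) s) * indicator E s) * (ennreal ((a + b) ^ CARD('d)) * K (b *\<^sub>R s + (- (a + b)) *\<^sub>R v)) \<partial>lborel)"
    proof (rule nn_integral_cong)
      fix v :: "real ^ 'd"
      have "ennreal (gd a (s - v)) * ennreal (gd b v) = ennreal (gd a (s - v) * gd b v)"
        by (rule ennreal_mult[symmetric]) (auto simp: gd_nonneg)
      also have "\<dots> = ennreal (gd (a + b) s * ((a + b) ^ CARD('d) * gd e (b *\<^sub>R s - (a + b) *\<^sub>R v)))"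
        using gd_conv[OF a b, of s v] by (simp add: e_def)
      also have "\<dots> = ennreal (gd (a + b) s) * (ennreal ((a + b) ^ CARD('d)) * ennreal (gd e (b *\<^sub>R s - (a + b) *\<^sub>R v)))"
        using a b by (simp add: ennreal_mult gd_nonneg)
      finally show "ennreal (gd a (s - v)) * ennreal (gd b v) * indicator E s * indicator F (b *\<^sub>R s - (a + b) *\<^sub>R v)
        = (ennreal (gd (a + b) s) * indicator E s) * (ennreal ((a + b) ^ CARD('d)) * K (b *\<^sub>R s + (- (a + b)) *\<^sub>R v))"
        by (simp add: K_def algebra_simps)
    qed
    also have "\<dots> = (ennreal (gd (a + b) s) * indicator E s) * (ennreal ((a + b) ^ CARD('d)) * (\<integral>\<^sup>+v. K (b *\<^sub>R s + (- (a + b)) *\<^sub>R v) \<partial>lborel))"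
      by (simp add: nn_integral_cmult)
    finally show "(\<integral>\<^sup>+v. ennreal (gd a (s - v)) * ennreal (gd b v) * indicator E s * indicator F (b *\<^sub>R s - (a + b) *\<^sub>R v) \<partial>lborel)
      = (ennreal (gd (a + b) s) * indicator E s) * (ennreal ((a + b) ^ CARD('d)) * (\<integral>\<^sup>+v. K (b *\<^sub>R s + (- (a + b)) *\<^sub>R v) \<partial>lborel))" .
  qed
  also have "\<dots> = (\<integral>\<^sup>+s. (ennreal (gd (a + b) s) * indicator E s) * (\<integral>\<^sup>+w. K w \<partial>lborel) \<partial>lborel)"
  proof (rule nn_integral_cong)
    fix s :: "real ^ 'd"
    have "(\<integral>\<^sup>+w. K w \<partial>lborel) = ennreal (\<bar>- (a + b)\<bar> ^ CARD('d)) * (\<integral>\<^sup>+v. K (b *\<^sub>R s + (- (a + b)) *\<^sub>R v) \<partial>lborel)"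
      using a b by (intro nn_int_affine) auto
    then show "(ennreal (gd (a + b) s) * indicator E s) * (ennreal ((a + b) ^ CARD('d)) * (\<integral>\<^sup>+v. K (b *\<^sub>R s + (- (a + b)) *\<^sub>R v) \<partial>lborel))
      = (ennreal (gd (a + b) s) * indicator E s) * (\<integral>\<^sup>+w. K w \<partial>lborel)"
      using a b by (simp add: add.commute)
  qed
  also have "\<dots> = (\<integral>\<^sup>+s. ennreal (gd (a + b) s) * indicator E s \<partial>lborel) * (\<integral>\<^sup>+w. K w \<partial>lborel)"
    by (rule nn_integral_multc) measurable
  finally show ?thesis by (simp add: K_def e_def)
qed


lemma (in prob_space) gauss_pair:
  fixes U V :: "'a \<Rightarrow> real ^ 'd"
  assumes U: "distributed M lborel U (\<lambda>x. ennreal (gd a x))"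
    and V: "distributed M lborel V (\<lambda>x. ennreal (gd b x))"
    and ind: "indep_var borel U borel V"
    and a: "a > 0" and b: "b > 0"
    and norm: "\<And>c. c > 0 \<Longrightarrow> (\<integral>\<^sup>+x. ennreal (gd c (x :: real ^ 'd)) \<partial>lborel) = 1"
  shows "distributed M lborel (\<lambda>\<omega>. U \<omega> + V \<omega>) (\<lambda>x. ennreal (gd (a + b) x))"
    and "indep_var borel (\<lambda>\<omega>. U \<omega> + V \<omega>) borel (\<lambda>\<omega>. b *\<^sub>R U \<omega> - a *\<^sub>R V \<omega>)"
proof -
  have Um[measurable]: "U \<in> borel_measurable M" using U by (simp add: distributed_def)
  have Vm[measurable]: "V \<in> borel_measurable M" using V by (simp add: distributed_def)
  define S where "S \<omega> = U \<omega> + V \<omega>" for \<omega>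
  define W where "W \<omega> = b *\<^sub>R U \<omega> - a *\<^sub>R V \<omega>" for \<omega>
  have Sm[measurable]: "S \<in> borel_measurable M" unfolding S_def by measurable
  have Wm[measurable]: "W \<in> borel_measurable M" unfolding W_def by measurable
  define \<alpha> where "\<alpha> E = (\<integral>\<^sup>+s. ennreal (gd (a + b) s) * indicator E s \<partial>lborel)" for E :: "(real ^ 'd) set"
  define \<beta> where "\<beta> F = (\<integral>\<^sup>+s. ennreal (gd (a * b * (a + b)) s) * indicator F s \<partial>lborel)" for F :: "(real ^ 'd) set"
  have key: "emeasure M {\<omega> \<in> space M. S \<omega> \<in> E \<and> W \<omega> \<in> F} = \<alpha> E * \<beta> F"
    if "E \<in> sets borel" "F \<in> sets borel" for E F
    using gauss_key[OF U V ind a b that] by (simp add: S_def W_def \<alpha>_def \<beta>_def)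
  have \<alpha>1: "\<alpha> UNIV = 1" using norm[of "a + b"] a b by (simp add: \<alpha>_def)
  have \<beta>1: "\<beta> UNIV = 1" using norm[of "a * b * (a + b)"] a b by (simp add: \<beta>_def)
  have PS: "emeasure M (S -` E \<inter> space M) = \<alpha> E" if [measurable]: "E \<in> sets borel" for E
  proof -
    have "S -` E \<inter> space M = {\<omega> \<in> space M. S \<omega> \<in> E \<and> W \<omega> \<in> UNIV}" by auto
    then show ?thesis using key[of E UNIV] \<beta>1 by simp
  qed
  have PW: "emeasure M (W -` F \<inter> space M) = \<beta> F" if [measurable]: "F \<in> sets borel" for F
  proof -
    have "W -` F \<inter> space M = {\<omega> \<in> space M. S \<omega> \<in> UNIV \<and> W \<omega> \<in> F}" by auto
    then show ?thesis using key[of UNIV F] \<alpha>1 by simp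
  qed
  have "distr M lborel S = density lborel (\<lambda>x. ennreal (gd (a + b) x))"
  proof (rule measure_eqI)
    fix A :: "(real ^ 'd) set" assume "A \<in> sets (distr M lborel S)"
    then have A[measurable]: "A \<in> sets borel" by simp
    show "emeasure (distr M lborel S) A = emeasure (density lborel (\<lambda>x. ennreal (gd (a + b) x))) A"
      using PS[OF A] by (simp add: emeasure_distr emeasure_density \<alpha>_def)
  qed simp
  then show "distributed M lborel (\<lambda>\<omega>. U \<omega> + V \<omega>) (\<lambda>x. ennreal (gd (a + b) x))"
    by (simp add: distributed_def S_def[symmetric])
  have "indep_set {S -` A \<inter> space M | A. A \<in> sets borel} {W -` A \<inter> space M | A. A \<in> sets borel}"
  proof (rule indep_setI)
    show "{S -` A \<inter> space M | A. A \<in> sets borel} \<subseteq> events" by auto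
    show "{W -` A \<inter> space M | A. A \<in> sets borel} \<subseteq> events" by auto
    fix x y assume "x \<in> {S -` A \<inter> space M | A. A \<in> sets borel}" "y \<in> {W -` A \<inter> space M | A. A \<in> sets borel}"
    then obtain E F where x: "x = S -` E \<inter> space M" and E[measurable]: "E \<in> sets borel"
      and y: "y = W -` F \<inter> space M" and F[measurable]: "F \<in> sets borel" by auto
    have xy: "x \<inter> y = {\<omega> \<in> space M. S \<omega> \<in> E \<and> W \<omega> \<in> F}" using x y by auto
    show "prob (x \<inter> y) = prob x * prob y"
      unfolding measure_def xy using key[OF E F] PS[OF E] PW[OF F] by (simp add: x y enn2real_mult)
  qed
  then have "indep_set (sigma_sets (space M) {S -` A \<inter> space M | A. A \<in> sets borel}) (sigma_sets (space M) {W -` A \<inter> space M | A. A \<in> sets borel})"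
    by (rule indep_set_sigma_sets) (rule Int_stable_vimage)+
  then have "indep_var borel S borel W"
    by (simp add: indep_var_eq)
  then show "indep_var borel (\<lambda>\<omega>. U \<omega> + V \<omega>) borel (\<lambda>\<omega>. b *\<^sub>R U \<omega> - a *\<^sub>R V \<omega>)"
    by (simp add: S_def[abs_def] W_def[abs_def])
qed


lemma (in prob_space) indep_set_mono:
  assumes "indep_set A B" "A' \<subseteq> A" "B' \<subseteq> B"
  shows "indep_set A' B'"
  using assms(1) unfolding indep_set_def
  by (rule indep_sets_mono_sets) (use assms(2,3) in \<open>auto split: bool.split\<close>)

lemma (in prob_space) indep_set_commute:
  assumes "indep_set A B" shows "indep_set B A"
proof -
  have *: "A \<subseteq> events" "B \<subseteq> events" "\<forall>a\<in>A. \<forall>b\<in>B. prob (a \<inter> b) = prob a * prob b"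
    using assms by (simp_all add: indep_sets2_eq)
  show ?thesis unfolding indep_sets2_eq
  proof (intro conjI ballI)
    fix b a assume "b \<in> B" "a \<in> A"
    then have "prob (a \<inter> b) = prob a * prob b" using * by blast
    then show "prob (b \<inter> a) = prob b * prob a" by (simp add: Int_commute mult.commute)
  qed (use * in auto)
qed

lemma (in prob_space) indep_set_three:
  assumes AB: "indep_set A B" and SZ: "indep_set S Z"
    and SB: "S \<subseteq> B" and ZB: "Z \<subseteq> B"
    and A: "sigma_algebra (space M) A" and Ssa: "sigma_algebra (space M) S"
    and B: "sigma_algebra (space M) B" and Zsa: "sigma_algebra (space M) Z"
  shows "indep_set (sigma_sets (space M) (A \<union> S)) Z"
proof -
  interpret A: sigma_algebra "space M" A by fact
  interpret S: sigma_algebra "space M" S by fact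
  interpret B: sigma_algebra "space M" B by fact
  interpret Z: sigma_algebra "space M" Z by fact
  have Aev: "A \<subseteq> events" using AB by (rule indep_setD_ev1)
  have Sev: "S \<subseteq> events" using SZ by (rule indep_setD_ev1)
  have Zev: "Z \<subseteq> events" using SZ by (rule indep_setD_ev2)
  define Gen where "Gen = {a \<inter> s | a s. a \<in> A \<and> s \<in> S}"
  have "indep_set Gen Z"
  proof (rule indep_setI)
    show "Gen \<subseteq> events" using Aev Sev by (auto simp: Gen_def)
    show "Z \<subseteq> events" by fact
    fix x z assume "x \<in> Gen" and z: "z \<in> Z"
    then obtain a s where x: "x = a \<inter> s" and a: "a \<in> A" and s: "s \<in> S" by (auto simp: Gen_def)
    have sB: "s \<in> B" and zB: "z \<in> B" using s z SB ZB by auto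
    have "prob (x \<inter> z) = prob (a \<inter> (s \<inter> z))" by (simp add: x Int_assoc)
    also have "\<dots> = prob a * prob (s \<inter> z)" using indep_setD[OF AB a B.Int[OF sB zB]] .
    also have "\<dots> = prob a * (prob s * prob z)" using indep_setD[OF SZ s z] by simp
    also have "\<dots> = prob (a \<inter> s) * prob z" using indep_setD[OF AB a sB] by simp
    finally show "prob (x \<inter> z) = prob x * prob z" by (simp add: x)
  qed
  then have "indep_set (sigma_sets (space M) Gen) (sigma_sets (space M) Z)"
  proof (rule indep_set_sigma_sets)
    show "Int_stable Gen"
    proof (unfold Int_stable_def, intro ballI)
      fix x y assume "x \<in> Gen" "y \<in> Gen"
      then obtain a s a' s' where "x = a \<inter> s" "a \<in> A" "s \<in> S" "y = a' \<inter> s'" "a' \<in> A" "s' \<in> S"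
        by (auto simp: Gen_def)
      then show "x \<inter> y \<in> Gen" unfolding Gen_def
        by (intro CollectI exI[of _ "a \<inter> a'"] exI[of _ "s \<inter> s'"]) auto
    qed
    show "Int_stable Z" by (rule Z.Int_stable)
  qed
  moreover have "sigma_sets (space M) (A \<union> S) \<subseteq> sigma_sets (space M) Gen"
  proof (rule sigma_sets_mono')
    show "A \<union> S \<subseteq> Gen"
    proof
      fix x assume "x \<in> A \<union> S"
      then show "x \<in> Gen"
      proof
        assume "x \<in> A" then have "x = x \<inter> space M" "space M \<in> S" using A.sets_into_space by auto
        then show ?thesis using \<open>x \<in> A\<close> unfolding Gen_def by blast
      next
        assume "x \<in> S" then have "x = space M \<inter> x" "space M \<in> A" using S.sets_into_space by auto
        then show ?thesis using \<open>x \<in> S\<close> unfolding Gen_def by blast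
      qed
    qed
  qed
  moreover have "Z \<subseteq> sigma_sets (space M) Z" by auto
  ultimately show ?thesis by (rule indep_set_mono)
qed

lemma (in prob_space) indep_vars_collect2:
  fixes Vf :: "'i \<Rightarrow> 'a \<Rightarrow> 'b::topological_space"
  assumes ind: "indep_vars (\<lambda>_. borel) Vf I"
    and I1: "I1 \<subseteq> I" and I2: "I2 \<subseteq> I" and dis: "I1 \<inter> I2 = {}"
  shows "indep_set (sigma_sets (space M) (\<Union>i\<in>I1. {Vf i -` A \<inter> space M | A. A \<in> sets borel}))
                   (sigma_sets (space M) (\<Union>i\<in>I2. {Vf i -` A \<inter> space M | A. A \<in> sets borel}))"
proof -
  let ?E = "\<lambda>i. {Vf i -` A \<inter> space M | A. A \<in> sets borel}"
  have h: "indep_sets ?E I" using ind unfolding indep_vars_def2 by auto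
  have "indep_sets ?E (\<Union>j\<in>UNIV. case_bool I1 I2 j)"
  proof (rule indep_sets_mono_index[OF _ h], rule subsetI)
    fix x assume "x \<in> (\<Union>j\<in>UNIV. case_bool I1 I2 j)"
    then obtain j where "x \<in> case_bool I1 I2 j" by auto
    then show "x \<in> I" using I1 I2 by (cases j) auto
  qed
  then have "indep_sets (\<lambda>j. sigma_sets (space M) (\<Union>i\<in>case_bool I1 I2 j. ?E i)) UNIV"
  proof (rule indep_sets_collect_sigma)
    show "Int_stable (?E i)" for i
    proof (unfold Int_stable_def, intro ballI)
      fix x y assume "x \<in> ?E i" "y \<in> ?E i"
      then obtain A B where "x = Vf i -` A \<inter> space M" "A \<in> sets borel" "y = Vf i -` B \<inter> space M" "B \<in> sets borel" by auto
      then show "x \<inter> y \<in> ?E i" by (intro CollectI exI[of _ "A \<inter> B"]) auto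
    qed
    show "disjoint_family_on (case_bool I1 I2) UNIV"
      using dis by (auto simp: disjoint_family_on_def split: bool.split)
  qed
  then show ?thesis unfolding indep_set_def
    by (rule indep_sets_mono_sets) (auto split: bool.split)
qed


lemma (in prob_space) cond_exp_indep:
  assumes subF: "subalgebra M F" and subG: "subalgebra M G"
    and GF: "sets G \<subseteq> sets F"
    and FGZ: "sets F \<subseteq> sigma_sets (space M) (sets G \<union> Z)"
    and Wsa: "sigma_algebra (space M) Wf" and Zsa: "sigma_algebra (space M) Z"
    and ind: "indep_set Wf Z"
    and GW: "sets G \<subseteq> Wf" and E: "E \<in> Wf"
  shows "AE x in M. real_cond_exp M F (indicator E) x = real_cond_exp M G (indicator E) x"
proof -
  interpret F: finite_measure_subalgebra M F by unfold_locales (rule subF)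
  interpret G: finite_measure_subalgebra M G by unfold_locales (rule subG)
  interpret Z: sigma_algebra "space M" Z by fact
  interpret W: sigma_algebra "space M" Wf by fact
  have Wev: "Wf \<subseteq> events" using ind by (rule indep_setD_ev1)
  have Zev: "Z \<subseteq> events" using ind by (rule indep_setD_ev2)
  have Eev[measurable]: "E \<in> events" using E Wev by auto
  define f :: "'a \<Rightarrow> real" where "f = indicator E"
  define h where "h = real_cond_exp M G f"
  have fi: "integrable M f" unfolding f_def by (rule integrable_real_indicator) (auto simp: less_top[symmetric])
  have fm[measurable]: "f \<in> borel_measurable M" using fi by auto
  have hi: "integrable M h" unfolding h_def by (rule G.real_cond_exp_int(1)[OF fi])
  have hG[measurable]: "h \<in> borel_measurable G" unfolding h_def by simp
  have spaces: "space F = space M" "space G = space M" using subF subG by (auto simp: subalgebra_def)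
  have subFG: "subalgebra F G" using GF spaces by (auto simp: subalgebra_def)
  have hF: "h \<in> borel_measurable F" by (rule measurable_from_subalg[OF subFG hG])
  have intG: "(\<integral>x\<in>C. f x \<partial>M) = (\<integral>x\<in>C. h x \<partial>M)" if "C \<in> sets G" for C
    unfolding h_def by (rule G.real_cond_exp_intA[OF fi that])
  have Gev: "sets G \<subseteq> events" using subG by (auto simp: subalgebra_def)
  define Gen where "Gen = {C \<inter> D | C D. C \<in> sets G \<and> D \<in> Z}"
  have GenP: "Gen \<subseteq> Pow (space M)" using Gev Zev sets.sets_into_space[of _ M] by (auto simp: Gen_def)
  have Genst: "Int_stable Gen"
  proof (unfold Int_stable_def, intro ballI)
    fix x y assume "x \<in> Gen" "y \<in> Gen"
    then obtain a s a' s' where "x = a \<inter> s" "a \<in> sets G" "s \<in> Z" "y = a' \<inter> s'" "a' \<in> sets G" "s' \<in> Z"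
      by (auto simp: Gen_def)
    then show "x \<inter> y \<in> Gen" unfolding Gen_def
      by (intro CollectI exI[of _ "a \<inter> a'"] exI[of _ "s \<inter> s'"]) auto
  qed
  have sub: "sets F \<subseteq> sigma_sets (space M) Gen"
  proof -
    have "sets G \<union> Z \<subseteq> Gen"
    proof
      fix x assume "x \<in> sets G \<union> Z"
      then show "x \<in> Gen"
      proof
        assume x: "x \<in> sets G" then have "x = x \<inter> space M" "space M \<in> Z" using Gev sets.sets_into_space by auto
        then show ?thesis using x unfolding Gen_def by blast
      next
        assume x: "x \<in> Z"
        have "x = space M \<inter> x" using x Z.sets_into_space by auto
        moreover have "space M \<in> sets G" using sets.top[of G] spaces(2) by simp
        ultimately have "x = space M \<inter> x" "space M \<in> sets G" by auto
        then show ?thesis using x unfolding Gen_def by blast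
      qed
    qed
    then show ?thesis using FGZ sigma_sets_mono'[of "sets G \<union> Z" Gen "space M"] by blast
  qed
  have sigev: "sigma_sets (space M) Gen \<subseteq> events"
    using Gev Zev by (intro sets.sigma_sets_subset) (auto simp: Gen_def)
  have main: "(\<integral>x\<in>B. f x \<partial>M) = (\<integral>x\<in>B. h x \<partial>M)" if "B \<in> sigma_sets (space M) Gen" for B
    using Genst GenP that
  proof (induction rule: sigma_sets_induct_disjoint)
    case (basic B)
    then obtain C D where B: "B = C \<inter> D" and C[measurable]: "C \<in> sets G" and D: "D \<in> Z" by (auto simp: Gen_def)
    have Cev[measurable]: "C \<in> events" using C Gev by auto
    have Dev[measurable]: "D \<in> events" using D Zev by auto
    have CE: "C \<inter> E \<in> Wf" using C GW E by (intro W.Int) auto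
    have "(\<integral>x\<in>B. f x \<partial>M) = prob (C \<inter> E \<inter> D)"
      unfolding B f_def set_lebesgue_integral_def
      by (simp add: indicator_inter_arith[symmetric] Int_ac)
    also have "\<dots> = prob (C \<inter> E) * prob D" by (rule indep_setD[OF ind CE D])
    also have "prob (C \<inter> E) = (\<integral>x\<in>C. f x \<partial>M)"
      unfolding f_def set_lebesgue_integral_def
      by (simp add: indicator_inter_arith[symmetric] Int_ac)
    also have "\<dots> = (\<integral>x\<in>C. h x \<partial>M)" by (rule intG[OF C])
    also have "(\<integral>x\<in>C. h x \<partial>M) * prob D = (\<integral>x. indicator D x * (indicator C x * h x) \<partial>M)"
    proof -
      have hm[measurable]: "h \<in> borel_measurable M" using hi by auto
      have Ch_G[measurable]: "(\<lambda>x. indicator C x * h x) \<in> borel_measurable G" by measurable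
      have Dsig: "sigma_sets (space M) {(indicator D :: 'a \<Rightarrow> real) -` A \<inter> space M | A. A \<in> sets borel} \<subseteq> Z"
      proof (rule order_trans[OF sigma_sets_mono'[of _ Z "space M"]], safe)
        fix A :: "real set" assume "A \<in> sets borel"
        have "(indicator D :: 'a \<Rightarrow> real) \<in> borel_measurable (sigma (space M) Z)"
          using D by (intro borel_measurable_indicator) (simp add: Z.sets_measure_of_eq)
        from measurable_sets[OF this \<open>A \<in> sets borel\<close>]
        show "(indicator D :: 'a \<Rightarrow> real) -` A \<inter> space M \<in> Z"
          by (simp add: Z.sets_measure_of_eq Z.space_measure_of_eq)
      qed (use Z.sigma_sets_eq in auto)
      have Csig: "sigma_sets (space M) {(\<lambda>x. indicator C x * h x) -` A \<inter> space M | A. A \<in> sets borel} \<subseteq> Wf"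
      proof -
        have "sigma_sets (space M) {(\<lambda>x. indicator C x * h x) -` A \<inter> space M | A. A \<in> sets borel} \<subseteq> sets G"
        proof (rule order_trans[OF sigma_sets_mono'[of _ "sets G" "space M"]], safe)
          fix A :: "real set" assume "A \<in> sets borel"
          from measurable_sets[OF Ch_G this]
          show "(\<lambda>x. indicator C x * h x) -` A \<inter> space M \<in> sets G" by (simp add: spaces)
        qed (use sets.sigma_sets_eq[of G] spaces in auto)
        then show ?thesis using GW by auto
      qed
      have "indep_var borel (indicator D) borel (\<lambda>x. indicator C x * h x)"
        unfolding indep_var_eq
        using indep_set_mono[OF indep_set_commute[OF ind] Dsig Csig] by (simp add: measurable_from_subalg[OF subG Ch_G])
      then have "(\<integral>x. indicator D x * (indicator C x * h x) \<partial>M) = (\<integral>x. indicator D x \<partial>M) * (\<integral>x. indicator C x * h x \<partial>M)"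
      proof (rule indep_var_lebesgue_integral)
        show "integrable M (indicator D :: 'a \<Rightarrow> real)"
          by (rule integrable_real_indicator) (auto simp: less_top[symmetric])
        show "integrable M (\<lambda>x. indicator C x * h x)"
          using integrable_mult_indicator[OF Cev hi] by simp
      qed
      then show ?thesis by (simp add: set_lebesgue_integral_def mult.commute)
    qed
    also have "\<dots> = (\<integral>x\<in>B. h x \<partial>M)"
      unfolding B set_lebesgue_integral_def by (simp add: indicator_inter_arith ac_simps)
    finally show ?case .
  next
    case empty
    then show ?case by (simp add: set_lebesgue_integral_def)
  next
    case (compl B)
    have Bev[measurable]: "B \<in> events" using compl(1) sigev by auto
    have sp: "(\<integral>x\<in>space M. f x \<partial>M) = (\<integral>x\<in>space M. h x \<partial>M)"
      by (rule intG) (metis sets.top spaces(2))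
    have diff: "(\<integral>x\<in>space M - B. g x \<partial>M) = (\<integral>x\<in>space M. g x \<partial>M) - (\<integral>x\<in>B. g x \<partial>M)"
      if "integrable M g" for g :: "'a \<Rightarrow> real"
    proof -
      have "(\<integral>x\<in>space M - B. g x \<partial>M) = (\<integral>x. indicator (space M) x * g x - indicator B x * g x \<partial>M)"
        unfolding set_lebesgue_integral_def
        by (intro Bochner_Integration.integral_cong) (auto simp: indicator_def)
      also have "\<dots> = (\<integral>x\<in>space M. g x \<partial>M) - (\<integral>x\<in>B. g x \<partial>M)"
      proof -
        have i1: "integrable M (\<lambda>x. indicator (space M) x * g x)"
          using integrable_mult_indicator[OF sets.top that] by simp
        have i2: "integrable M (\<lambda>x. indicator B x * g x)"
          using integrable_mult_indicator[OF Bev that] by simp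
        show ?thesis unfolding set_lebesgue_integral_def using Bochner_Integration.integral_diff[OF i1 i2] by simp
      qed
      finally show ?thesis .
    qed
    show ?case using diff[OF fi] diff[OF hi] sp compl(2) by simp
  next
    case (union A)
    have Aev[measurable]: "A i \<in> events" for i using union(2) sigev by auto
    have dis: "A i \<inter> A j = {}" if "i \<noteq> j" for i j using union(1) that by (auto simp: disjoint_family_on_def)
    have Uev: "(\<Union>i. A i) \<in> events" by auto
    have cadd: "(\<integral>x\<in>(\<Union>i. A i). g x \<partial>M) = (\<Sum>i. (\<integral>x\<in>A i. g x \<partial>M))"
      if gi: "integrable M g" for g :: "'a \<Rightarrow> real"
    proof (rule lebesgue_integral_countable_add)
      show "A i \<in> sets M" for i using Aev .
      show "A i \<inter> A j = {}" if "i \<noteq> j" for i j using dis[OF that] .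
      show "set_integrable M (\<Union>i. A i) g" unfolding set_integrable_def by (rule integrable_mult_indicator[OF Uev gi])
    qed
    have "(\<integral>x\<in>(\<Union>i. A i). f x \<partial>M) = (\<Sum>i. (\<integral>x\<in>A i. f x \<partial>M))" by (rule cadd[OF fi])
    also have "\<dots> = (\<Sum>i. (\<integral>x\<in>A i. h x \<partial>M))" using union(3) by simp
    also have "\<dots> = (\<integral>x\<in>(\<Union>i. A i). h x \<partial>M)" by (rule cadd[OF hi, symmetric])
    finally show ?case .
  qed
  have "AE x in M. real_cond_exp M F f x = h x"
  proof (rule F.real_cond_exp_charact)
    fix A assume "A \<in> sets F"
    then show "(\<integral>x\<in>A. f x \<partial>M) = (\<integral>x\<in>A. h x \<partial>M)" using sub main by auto
  qed (auto simp: fi hi hF)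
  then show ?thesis by (simp add: f_def h_def)
qed


locale obs = prob_space M for M :: "'a measure" +
  fixes X :: "'a \<Rightarrow> real ^ 'd" and N :: "nat \<Rightarrow> 'a \<Rightarrow> real ^ 'd" and \<delta> :: "nat \<Rightarrow> real"
  assumes Xm[measurable]: "X \<in> borel_measurable M"
    and \<delta>pos: "\<And>k. k \<ge> 1 \<Longrightarrow> \<delta> k > 0"
    and Ng: "\<And>k. k \<ge> 1 \<Longrightarrow> std_gaussian_vector M (N k)"
    and ind: "indep_vars (\<lambda>_. borel) (\<lambda>i. case i of None \<Rightarrow> X | Some k \<Rightarrow> N k) (insert None (Some ` {1..}))"
begin

definition t :: "nat \<Rightarrow> real" where "t j = (\<Sum>i\<in>{1..j}. \<delta> i)"
definition S :: "nat \<Rightarrow> 'a \<Rightarrow> real ^ 'd" where "S j \<omega> = (\<Sum>i\<in>{1..j}. sqrt (\<delta> i) *\<^sub>R N i \<omega>)"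
abbreviation Y where "Y \<equiv> obs_chain \<delta> X N"
definition W :: "nat \<Rightarrow> 'a \<Rightarrow> real ^ 'd" where "W j \<omega> = t (Suc j) *\<^sub>R Y j \<omega> - t j *\<^sub>R Y (Suc j) \<omega>"
definition ev :: "('a \<Rightarrow> real ^ 'd) \<Rightarrow> 'a set set" where "ev f = {f -` A \<inter> space M | A. A \<in> sets borel}"
definition sev where "sev f = sigma_sets (space M) (ev f)"
definition NN where "NN J = sigma_sets (space M) (\<Union>i\<in>J. ev (N i))"
definition ZZ where "ZZ j = sigma_sets (space M) (\<Union>i\<in>{1..<j}. ev (W i))"

lemma t_Suc: "t (Suc j) = t j + \<delta> (Suc j)" by (simp add: t_def)

lemma t_pos: "j \<ge> 1 \<Longrightarrow> t j > 0"
  unfolding t_def by (intro sum_pos) (auto intro: \<delta>pos)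

lemma S_Suc: "S (Suc j) \<omega> = S j \<omega> + sqrt (\<delta> (Suc j)) *\<^sub>R N (Suc j) \<omega>" by (simp add: S_def)

lemma Y_eq: "Y j \<omega> = t j *\<^sub>R X \<omega> + S j \<omega>"
  by (induction j) (simp_all add: t_Suc S_Suc algebra_simps S_def t_def)

lemma W_eq: "W j \<omega> = \<delta> (Suc j) *\<^sub>R S j \<omega> - (t j * sqrt (\<delta> (Suc j))) *\<^sub>R N (Suc j) \<omega>"
  unfolding W_def Y_eq t_Suc S_Suc by (simp add: algebra_simps)

lemma Y_back: "j \<ge> 1 \<Longrightarrow> Y j \<omega> = (1 / t (Suc j)) *\<^sub>R (W j \<omega> + t j *\<^sub>R Y (Suc j) \<omega>)"
proof -
  assume "j \<ge> 1"
  then have "t (Suc j) > 0" by (intro t_pos) auto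
  then show ?thesis unfolding W_def by (simp add: algebra_simps)
qed

lemma Nm[measurable]: "k \<ge> 1 \<Longrightarrow> N k \<in> borel_measurable M"
  using Ng[of k] by (simp add: std_gaussian_vector_def distributed_def)

lemma Ndist: "k \<ge> 1 \<Longrightarrow> distributed M lborel (N k) (\<lambda>x. ennreal (gd 1 x))"
  using Ng[of k] by (simp add: std_gaussian_vector_def gd_one)

lemma sNdist: "k \<ge> 1 \<Longrightarrow> distributed M lborel (\<lambda>\<omega>. sqrt (\<delta> k) *\<^sub>R N k \<omega>) (\<lambda>x. ennreal (gd (\<delta> k) x))"
  using gd_scale_distr[OF Ndist[of k], of "sqrt (\<delta> k)"] \<delta>pos[of k] by simp

lemma gd_norm: "c > 0 \<Longrightarrow> (\<integral>\<^sup>+x. ennreal (gd c (x :: real ^ 'd)) \<partial>lborel) = 1"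
proof -
  assume c: "c > 0"
  define Z where "Z \<omega> = sqrt c *\<^sub>R N 1 \<omega>" for \<omega>
  have D: "distributed M lborel Z (\<lambda>x. ennreal (gd c x))"
    using gd_scale_distr[OF Ndist[of 1], of "sqrt c"] c by (simp add: Z_def[abs_def])
  have Zm: "Z \<in> measurable M lborel" using D by (simp add: distributed_def)
  have "emeasure (distr M lborel Z) UNIV = emeasure (density lborel (\<lambda>x :: real ^ 'd. ennreal (gd c x))) UNIV"
    using D by (simp add: distributed_def)
  moreover have "emeasure (distr M lborel Z) UNIV = 1"
    using Zm by (subst emeasure_distr) (auto simp: emeasure_space_1)
  moreover have gm: "(\<lambda>x. ennreal (gd c x)) \<in> borel_measurable (lborel :: (real ^ 'd) measure)" by measurable
  ultimately show ?thesis using emeasure_density[OF gm, of UNIV] by simp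
qed

lemma ev_Pow: "ev f \<subseteq> Pow (space M)" by (auto simp: ev_def)

lemma meas_of_ev:
  assumes G: "G \<subseteq> Pow (space M)" and sub: "ev f \<subseteq> sigma_sets (space M) G"
  shows "f \<in> borel_measurable (sigma (space M) G)"
proof (rule measurableI)
  fix A :: "(real ^ 'd) set" assume "A \<in> sets borel"
  then have "f -` A \<inter> space M \<in> ev f" by (auto simp: ev_def)
  then show "f -` A \<inter> space (sigma (space M) G) \<in> sets (sigma (space M) G)"
    using sub G by (auto simp: sets_measure_of space_measure_of_conv)
qed simp

lemma sev_of_meas:
  assumes G: "G \<subseteq> Pow (space M)" and f: "f \<in> borel_measurable (sigma (space M) G)"
  shows "sev f \<subseteq> sigma_sets (space M) G"
  unfolding sev_def
proof (rule sigma_sets_mono, rule subsetI)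
  fix x assume "x \<in> ev f"
  then obtain A where x: "x = f -` A \<inter> space M" and A: "A \<in> sets borel" by (auto simp: ev_def)
  from measurable_sets[OF f A] show "x \<in> sigma_sets (space M) G"
    using G by (simp add: x sets_measure_of space_measure_of_conv)
qed

lemma ev_sev: "ev f \<subseteq> sev f" by (auto simp: sev_def)

lemma sev_Pow: "sev f \<subseteq> Pow (space M)"
  unfolding sev_def using sigma_sets_into_sp[OF ev_Pow] by blast

lemma sev_events: "f \<in> borel_measurable M \<Longrightarrow> sev f \<subseteq> events"
  unfolding sev_def by (intro sets.sigma_sets_subset) (auto simp: ev_def)

lemma sa: "G \<subseteq> Pow (space M) \<Longrightarrow> sigma_algebra (space M) (sigma_sets (space M) G)"
  by (rule sigma_algebra_sigma_sets)

end


context obs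
begin

definition MN where "MN J = sigma (space M) (\<Union>i\<in>J. ev (N i))"

lemma MN_Pow: "(\<Union>i\<in>J. ev (N i)) \<subseteq> Pow (space M)" using ev_Pow by auto

lemma sets_MN: "sets (MN J) = NN J"
  unfolding MN_def NN_def using MN_Pow by (simp add: sets_measure_of)

lemma N_MN: "i \<in> J \<Longrightarrow> N i \<in> borel_measurable (MN J)"
  unfolding MN_def by (rule meas_of_ev[OF MN_Pow]) auto

lemma S_MN: "{1..j} \<subseteq> J \<Longrightarrow> S j \<in> borel_measurable (MN J)"
  unfolding S_def
  by (intro borel_measurable_sum borel_measurable_scaleR borel_measurable_const N_MN) auto

lemma W_MN: "{1..Suc j} \<subseteq> J \<Longrightarrow> W j \<in> borel_measurable (MN J)"
proof -
  assume J: "{1..Suc j} \<subseteq> J"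
  have "S j \<in> borel_measurable (MN J)" using J by (intro S_MN) auto
  moreover have "N (Suc j) \<in> borel_measurable (MN J)" using J by (intro N_MN) auto
  ultimately have "(\<lambda>\<omega>. \<delta> (Suc j) *\<^sub>R S j \<omega> - (t j * sqrt (\<delta> (Suc j))) *\<^sub>R N (Suc j) \<omega>) \<in> borel_measurable (MN J)"
    by measurable
  then show ?thesis by (simp add: W_eq[abs_def])
qed

lemma sev_NN: "f \<in> borel_measurable (MN J) \<Longrightarrow> sev f \<subseteq> NN J"
  unfolding NN_def by (rule sev_of_meas[OF MN_Pow]) (simp add: MN_def)

lemma Sm[measurable]: "S j \<in> borel_measurable M"
  unfolding S_def by (intro borel_measurable_sum borel_measurable_scaleR borel_measurable_const Nm) auto

lemma Ym[measurable]: "Y j \<in> borel_measurable M"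
  by (simp add: Y_eq[abs_def])

lemma Wm[measurable]: "W j \<in> borel_measurable M"
  unfolding W_def by measurable

lemma NN_sa: "sigma_algebra (space M) (NN J)" unfolding NN_def by (rule sa[OF MN_Pow])

lemma ZZ_Pow: "(\<Union>i\<in>{1..<j}. ev (W i)) \<subseteq> Pow (space M)" using ev_Pow by auto

lemma ZZ_sa: "sigma_algebra (space M) (ZZ j)" unfolding ZZ_def by (rule sa[OF ZZ_Pow])

lemma sev_sa: "sigma_algebra (space M) (sev f)" unfolding sev_def by (rule sa[OF ev_Pow])

lemma coll:
  assumes "I1 \<subseteq> insert None (Some ` {1..})" "I2 \<subseteq> insert None (Some ` {1..})" "I1 \<inter> I2 = {}"
  shows "indep_set (sigma_sets (space M) (\<Union>i\<in>I1. ev (case i of None \<Rightarrow> X | Some k \<Rightarrow> N k)))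
                   (sigma_sets (space M) (\<Union>i\<in>I2. ev (case i of None \<Rightarrow> X | Some k \<Rightarrow> N k)))"
  using indep_vars_collect2[OF ind assms] by (simp add: ev_def)

lemma IA: "indep_set (NN {Suc j}) (NN {1..j})"
proof -
  have s1: "{Some (Suc j)} \<subseteq> insert None (Some ` {1..})" by auto
  have s2: "Some ` {1..j} \<subseteq> insert None (Some ` {1..})" by auto
  have s3: "{Some (Suc j)} \<inter> Some ` {1..j} = {}" by auto
  show ?thesis using coll[OF s1 s2 s3] by (simp add: NN_def)
qed

lemma IB: "indep_set (sigma_sets (space M) (ev X \<union> ev (N (Suc k)))) (NN {1..k})"
proof -
  have s1: "{None, Some (Suc k)} \<subseteq> insert None (Some ` {1..})" by auto
  have s2: "Some ` {1..k} \<subseteq> insert None (Some ` {1..})" by auto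
  have s3: "{None, Some (Suc k)} \<inter> Some ` {1..k} = {}" by auto
  show ?thesis using coll[OF s1 s2 s3] by (simp add: NN_def)
qed

end


context obs
begin

lemma sev_sub_events: "sev f \<subseteq> events" if "f \<in> borel_measurable M" using sev_events[OF that] .

lemma Q: "j \<ge> 1 \<Longrightarrow> distributed M lborel (S j) (\<lambda>x. ennreal (gd (t j) x)) \<and> indep_set (sev (S j)) (ZZ j)
   \<and> sev (S j) \<subseteq> NN {1..j} \<and> ZZ j \<subseteq> NN {1..j}"
proof (induction j rule: nat_induct_at_least)
  case base
  have S1: "S 1 = (\<lambda>\<omega>. sqrt (\<delta> 1) *\<^sub>R N 1 \<omega>)" by (simp add: S_def[abs_def])
  have t1: "t 1 = \<delta> 1" by (simp add: t_def)
  have Z1: "ZZ 1 = {{}, space M}" by (simp add: ZZ_def sigma_sets_empty_eq)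
  have D: "distributed M lborel (S 1) (\<lambda>x. ennreal (gd (t 1) x))"
    unfolding S1 t1 by (rule sNdist) simp
  have I: "indep_set (sev (S 1)) (ZZ 1)"
    unfolding Z1
  proof (rule indep_setI)
    show "sev (S 1) \<subseteq> events" by (rule sev_events) simp
    show "{{}, space M} \<subseteq> events" by auto
    fix a b assume a: "a \<in> sev (S 1)" and b: "b \<in> {{}, space M}"
    have "a \<in> events" using a sev_events[of "S 1"] by auto
    then have "a \<subseteq> space M" using sets.sets_into_space by auto
    then show "prob (a \<inter> b) = prob a * prob b" using b by (auto simp: Int_absorb2 prob_space)
  qed
  have s1: "sev (S 1) \<subseteq> NN {1..1}" by (rule sev_NN) (rule S_MN, simp)
  have s2: "ZZ 1 \<subseteq> NN {1..1}" unfolding Z1 NN_def by (auto intro: sigma_sets.Empty sigma_sets_top)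
  show ?case using D I s1 s2 by simp
next
  case (Suc j)
  note j = \<open>1 \<le> j\<close>
  have Dj: "distributed M lborel (S j) (\<lambda>x. ennreal (gd (t j) x))"
    and Ij: "indep_set (sev (S j)) (ZZ j)" and Sj: "sev (S j) \<subseteq> NN {1..j}" and Zj: "ZZ j \<subseteq> NN {1..j}"
    using Suc.IH by auto
  define a where "a = t j"
  define b where "b = \<delta> (Suc j)"
  define V where "V \<omega> = sqrt b *\<^sub>R N (Suc j) \<omega>" for \<omega>
  have a: "a > 0" using t_pos[OF j] by (simp add: a_def)
  have b: "b > 0" using \<delta>pos[of "Suc j"] by (simp add: b_def)
  have DV: "distributed M lborel V (\<lambda>x. ennreal (gd b x))"
    unfolding V_def[abs_def] b_def by (rule sNdist) simp
  have VMN: "V \<in> borel_measurable (MN {Suc j})"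
    unfolding V_def[abs_def] using N_MN[of "Suc j" "{Suc j}"] by measurable
  have VMM: "V \<in> borel_measurable M" unfolding V_def[abs_def] by measurable
  have indUV: "indep_var borel (S j) borel V"
    unfolding indep_var_eq
  proof (intro conjI)
    show "random_variable borel (S j)" "random_variable borel V" using VMM by auto
    have "sev V \<subseteq> NN {Suc j}" by (rule sev_NN[OF VMN])
    then show "indep_set (sigma_sets (space M) {S j -` A \<inter> space M |A. A \<in> sets borel})
                         (sigma_sets (space M) {V -` A \<inter> space M |A. A \<in> sets borel})"
      using indep_set_mono[OF indep_set_commute[OF IA[of j]] Sj] unfolding sev_def ev_def by blast
  qed
  have GP: "distributed M lborel (\<lambda>\<omega>. S j \<omega> + V \<omega>) (\<lambda>x. ennreal (gd (a + b) x))"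
      "indep_var borel (\<lambda>\<omega>. S j \<omega> + V \<omega>) borel (\<lambda>\<omega>. b *\<^sub>R S j \<omega> - a *\<^sub>R V \<omega>)"
    using gauss_pair[OF Dj[folded a_def] DV indUV a b gd_norm] by auto
  have SV: "(\<lambda>\<omega>. S j \<omega> + V \<omega>) = S (Suc j)" by (auto simp: S_Suc V_def b_def)
  have WV: "(\<lambda>\<omega>. b *\<^sub>R S j \<omega> - a *\<^sub>R V \<omega>) = W j" by (auto simp: W_eq V_def a_def b_def)
  have tab: "a + b = t (Suc j)" by (simp add: a_def b_def t_Suc)
  have D': "distributed M lborel (S (Suc j)) (\<lambda>x. ennreal (gd (t (Suc j)) x))"
    using GP(1) unfolding SV tab .
  have IG: "indep_set (sev (S (Suc j))) (sev (W j))"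
    using GP(2) unfolding SV WV indep_var_eq sev_def ev_def by blast
  define P where "P = sigma_sets (space M) (NN {Suc j} \<union> sev (S j))"
  have PPow: "NN {Suc j} \<union> sev (S j) \<subseteq> Pow (space M)"
    using sev_Pow sigma_sets_into_sp[OF MN_Pow[of "{Suc j}"]] unfolding NN_def by blast
  have I1: "indep_set P (ZZ j)"
    unfolding P_def
    by (rule indep_set_three[OF IA Ij Sj Zj NN_sa sev_sa NN_sa ZZ_sa])
  have SjP: "S j \<in> borel_measurable (sigma (space M) (NN {Suc j} \<union> sev (S j)))"
    by (rule meas_of_ev[OF PPow]) (use ev_sev in auto)
  have NP: "N (Suc j) \<in> borel_measurable (sigma (space M) (NN {Suc j} \<union> sev (S j)))"
    by (rule meas_of_ev[OF PPow]) (auto simp: NN_def)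
  have WP: "sev (W j) \<subseteq> P"
  proof -
    have "(\<lambda>\<omega>. \<delta> (Suc j) *\<^sub>R S j \<omega> - (t j * sqrt (\<delta> (Suc j))) *\<^sub>R N (Suc j) \<omega>) \<in> borel_measurable (sigma (space M) (NN {Suc j} \<union> sev (S j)))"
      using SjP NP by measurable
    then have "W j \<in> borel_measurable (sigma (space M) (NN {Suc j} \<union> sev (S j)))" by (simp add: W_eq[abs_def])
    then show ?thesis unfolding P_def by (rule sev_of_meas[OF PPow])
  qed
  have SP: "sev (S (Suc j)) \<subseteq> P"
  proof -
    have "(\<lambda>\<omega>. S j \<omega> + sqrt (\<delta> (Suc j)) *\<^sub>R N (Suc j) \<omega>) \<in> borel_measurable (sigma (space M) (NN {Suc j} \<union> sev (S j)))"
      using SjP NP by measurable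
    then have "S (Suc j) \<in> borel_measurable (sigma (space M) (NN {Suc j} \<union> sev (S j)))" by (simp add: S_Suc[abs_def])
    then show ?thesis unfolding P_def by (rule sev_of_meas[OF PPow])
  qed
  have I2: "indep_set (sigma_sets (space M) (ZZ j \<union> sev (W j))) (sev (S (Suc j)))"
    by (rule indep_set_three[OF indep_set_commute[OF I1] indep_set_commute[OF IG] WP SP ZZ_sa sev_sa])
       (unfold P_def, rule sa[OF PPow], rule sev_sa)
  have ZS: "ZZ (Suc j) \<subseteq> sigma_sets (space M) (ZZ j \<union> sev (W j))"
    unfolding ZZ_def[of "Suc j"]
  proof (rule sigma_sets_mono, rule subsetI)
    fix x assume "x \<in> (\<Union>i\<in>{1..<Suc j}. ev (W i))"
    then obtain i where i: "i \<in> {1..<Suc j}" "x \<in> ev (W i)" by auto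
    show "x \<in> sigma_sets (space M) (ZZ j \<union> sev (W j))"
    proof (cases "i = j")
      case True then show ?thesis using i ev_sev by auto
    next
      case False
      then have "i \<in> {1..<j}" using i by auto
      then have "x \<in> (\<Union>i\<in>{1..<j}. ev (W i))" using i by auto
      then have "x \<in> ZZ j" unfolding ZZ_def by (rule sigma_sets.Basic)
      then show ?thesis by auto
    qed
  qed
  have I': "indep_set (sev (S (Suc j))) (ZZ (Suc j))"
    by (rule indep_set_mono[OF indep_set_commute[OF I2] order_refl ZS])
  have S': "sev (S (Suc j)) \<subseteq> NN {1..Suc j}" by (rule sev_NN) (rule S_MN, simp)
  have Z': "ZZ (Suc j) \<subseteq> NN {1..Suc j}"
    unfolding ZZ_def[of "Suc j"] NN_def
  proof (rule sigma_sets_mono, rule subsetI)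
    fix x assume "x \<in> (\<Union>i\<in>{1..<Suc j}. ev (W i))"
    then obtain i where i: "i \<in> {1..<Suc j}" "x \<in> ev (W i)" by auto
    have "W i \<in> borel_measurable (MN {1..Suc j})" using i by (intro W_MN) auto
    then have "sev (W i) \<subseteq> NN {1..Suc j}" by (rule sev_NN)
    then show "x \<in> sigma_sets (space M) (\<Union>i\<in>{1..Suc j}. ev (N i))"
      using i ev_sev unfolding NN_def by blast
  qed
  show ?case using D' I' S' Z' by simp
qed

end


context obs
begin

lemma gen_eq: "gen_sigma M Y J = sigma (space M) (\<Union>j\<in>J. ev (Y j))"
  by (simp add: gen_sigma_def ev_def)

lemma genPow: "(\<Union>j\<in>J. ev (Y j)) \<subseteq> Pow (space M)" using ev_Pow by auto

lemma gen_sets: "sets (gen_sigma M Y J) = sigma_sets (space M) (\<Union>j\<in>J. ev (Y j))"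
  unfolding gen_eq using genPow by (simp add: sets_measure_of)

lemma gen_sub: "subalgebra M (gen_sigma M Y J)"
  unfolding subalgebra_def
proof
  show "sets (gen_sigma M Y J) \<subseteq> sets M"
    unfolding gen_sets by (intro sets.sigma_sets_subset) (auto simp: ev_def)
  show "space (gen_sigma M Y J) = space M"
    unfolding gen_eq using genPow by (simp add: space_measure_of_conv)
qed

lemma down:
  assumes k: "k \<ge> 1" and jk: "j \<le> k"
  shows "Y j \<in> borel_measurable (sigma (space M) (sev (Y k) \<union> ZZ k))"
proof -
  have GPow: "sev (Y k) \<union> ZZ k \<subseteq> Pow (space M)"
    using sev_Pow sigma_sets_into_sp[OF ZZ_Pow[of k]] unfolding ZZ_def by blast
  show ?thesis
    using jk
  proof (induction j rule: inc_induct)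
    case base
    show ?case by (rule meas_of_ev[OF GPow]) (use ev_sev in blast)
  next
    case (step n)
    show ?case
    proof (cases "n = 0")
      case True
      then have "Y n = (\<lambda>_. 0)" by (intro ext) simp
      then show ?thesis by (simp only:) (rule borel_measurable_const)
    next
      case False
      then have n1: "n \<ge> 1" by simp
      have Wn: "W n \<in> borel_measurable (sigma (space M) (sev (Y k) \<union> ZZ k))"
      proof (rule meas_of_ev[OF GPow])
        have nk: "n \<in> {1..<k}" using n1 step.hyps by auto
        have "ev (W n) \<subseteq> (\<Union>i\<in>{1..<k}. ev (W i))" by (rule UN_upper[OF nk])
        then have e1: "ev (W n) \<subseteq> ZZ k" unfolding ZZ_def by (rule order_trans[OF _ sigma_sets_superset_generator])
        have "ZZ k \<subseteq> sigma_sets (space M) (sev (Y k) \<union> ZZ k)"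
          by (rule order_trans[OF Un_upper2 sigma_sets_superset_generator])
        then show "ev (W n) \<subseteq> sigma_sets (space M) (sev (Y k) \<union> ZZ k)" by (rule order_trans[OF e1])
      qed
      have "(\<lambda>\<omega>. (1 / t (Suc n)) *\<^sub>R (W n \<omega> + t n *\<^sub>R Y (Suc n) \<omega>)) \<in> borel_measurable (sigma (space M) (sev (Y k) \<union> ZZ k))"
        using Wn step.IH by measurable
      moreover have "Y n = (\<lambda>\<omega>. (1 / t (Suc n)) *\<^sub>R (W n \<omega> + t n *\<^sub>R Y (Suc n) \<omega>))"
        by (rule ext) (rule Y_back[OF n1])
      ultimately show ?thesis by (simp only:)
    qed
  qed
qed

theorem markov: "markov_chain M Y"
  unfolding markov_chain_def
proof (intro conjI allI ballI)
  fix k show "Y k \<in> borel_measurable M" by (rule Ym)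
next
  fix k and A :: "(real ^ 'd) set" assume A: "A \<in> sets borel"
  show "AE \<omega> in M. real_cond_exp M (gen_sigma M Y {..k}) (indicator (Y (Suc k) -` A \<inter> space M)) \<omega>
                  = real_cond_exp M (gen_sigma M Y {k}) (indicator (Y (Suc k) -` A \<inter> space M)) \<omega>"
  proof (cases "k = 0")
    case True
    then have "{..k} = {k}" by auto
    then show ?thesis by (simp only:) (rule AE_I2, rule refl)
  next
    case False
    then have k: "k \<ge> 1" by simp
    define Af where "Af = sigma_sets (space M) (ev X \<union> ev (N (Suc k)))"
    have AfPow: "ev X \<union> ev (N (Suc k)) \<subseteq> Pow (space M)" using ev_Pow by auto
    define Wf where "Wf = sigma_sets (space M) (Af \<union> sev (S k))"
    have WPow: "Af \<union> sev (S k) \<subseteq> Pow (space M)"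
      using sev_Pow sigma_sets_into_sp[OF AfPow] unfolding Af_def by blast
    have Qk: "indep_set (sev (S k)) (ZZ k)" "sev (S k) \<subseteq> NN {1..k}" "ZZ k \<subseteq> NN {1..k}"
      using Q[OF k] by auto
    have indW: "indep_set Wf (ZZ k)"
      unfolding Wf_def
      by (rule indep_set_three[OF IB[of k, folded Af_def] Qk]) (unfold Af_def, rule sa[OF AfPow], rule sev_sa, rule NN_sa, rule ZZ_sa)
    have XW: "X \<in> borel_measurable (sigma (space M) (Af \<union> sev (S k)))"
      by (rule meas_of_ev[OF WPow]) (auto simp: Af_def)
    have NW: "N (Suc k) \<in> borel_measurable (sigma (space M) (Af \<union> sev (S k)))"
      by (rule meas_of_ev[OF WPow]) (auto simp: Af_def)
    have SW: "S k \<in> borel_measurable (sigma (space M) (Af \<union> sev (S k)))"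
      by (rule meas_of_ev[OF WPow]) (use ev_sev in blast)
    have YkW: "Y k \<in> borel_measurable (sigma (space M) (Af \<union> sev (S k)))"
    proof -
      have "(\<lambda>\<omega>. t k *\<^sub>R X \<omega> + S k \<omega>) \<in> borel_measurable (sigma (space M) (Af \<union> sev (S k)))"
        using XW SW by measurable
      then show ?thesis by (simp add: Y_eq[abs_def])
    qed
    have YSkW: "Y (Suc k) \<in> borel_measurable (sigma (space M) (Af \<union> sev (S k)))"
    proof -
      have "(\<lambda>\<omega>. Y k \<omega> + \<delta> (Suc k) *\<^sub>R X \<omega> + sqrt (\<delta> (Suc k)) *\<^sub>R N (Suc k) \<omega>) \<in> borel_measurable (sigma (space M) (Af \<union> sev (S k)))"
        using XW NW YkW by measurable
      moreover have "Y (Suc k) = (\<lambda>\<omega>. Y k \<omega> + \<delta> (Suc k) *\<^sub>R X \<omega> + sqrt (\<delta> (Suc k)) *\<^sub>R N (Suc k) \<omega>)"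
        by (rule ext) simp
      ultimately show ?thesis by (simp only:)
    qed
    have E: "Y (Suc k) -` A \<inter> space M \<in> Wf"
      using measurable_sets[OF YSkW A] WPow unfolding Wf_def by (simp add: sets_measure_of space_measure_of_conv)
    have GW: "sets (gen_sigma M Y {k}) \<subseteq> Wf"
      unfolding gen_sets Wf_def using sev_of_meas[OF WPow YkW] by (simp add: sev_def)
    have GF: "sets (gen_sigma M Y {k}) \<subseteq> sets (gen_sigma M Y {..k})"
      unfolding gen_sets by (rule sigma_sets_mono') auto
    have FGZ: "sets (gen_sigma M Y {..k}) \<subseteq> sigma_sets (space M) (sets (gen_sigma M Y {k}) \<union> ZZ k)"
    proof -
      have "sets (gen_sigma M Y {k}) = sev (Y k)" by (simp add: gen_sets sev_def)
      moreover have "sigma_sets (space M) (\<Union>j\<in>{..k}. ev (Y j)) \<subseteq> sigma_sets (space M) (sev (Y k) \<union> ZZ k)"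
      proof (rule sigma_sets_mono, rule subsetI)
        fix x assume "x \<in> (\<Union>j\<in>{..k}. ev (Y j))"
        then obtain j where j: "j \<le> k" "x \<in> ev (Y j)" by auto
        have GPow: "sev (Y k) \<union> ZZ k \<subseteq> Pow (space M)"
          using sev_Pow sigma_sets_into_sp[OF ZZ_Pow[of k]] unfolding ZZ_def by blast
        have "sev (Y j) \<subseteq> sigma_sets (space M) (sev (Y k) \<union> ZZ k)"
          by (rule sev_of_meas[OF GPow down[OF k j(1)]])
        then show "x \<in> sigma_sets (space M) (sev (Y k) \<union> ZZ k)" using j(2) ev_sev by blast
      qed
      ultimately show ?thesis by (simp add: gen_sets)
    qed
    show ?thesis
      by (rule cond_exp_indep[OF gen_sub gen_sub GF FGZ _ ZZ_sa indW GW E])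
         (unfold Wf_def, rule sa[OF WPow])
  qed
qed

end


theorem lemma1:
  fixes M :: "'a measure"
    and X :: "'a \<Rightarrow> real ^ 'd"
    and N :: "nat \<Rightarrow> 'a \<Rightarrow> real ^ 'd"
    and \<delta> :: "nat \<Rightarrow> real"
  assumes "prob_space M"
    and "X \<in> borel_measurable M"
    and "\<And>k. k \<ge> 1 \<Longrightarrow> \<delta> k > 0"
    and "\<And>k. k \<ge> 1 \<Longrightarrow> std_gaussian_vector M (N k)"
    and "prob_space.indep_vars M (\<lambda>_. borel)
           (\<lambda>i. case i of None \<Rightarrow> X | Some k \<Rightarrow> N k) (insert None (Some ` {1..}))"
  shows "markov_chain M (obs_chain \<delta> X N)"
proof -
  have "obs M X N \<delta>"
    unfolding obs_def obs_axioms_def using assms by auto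
  then interpret obs M X N \<delta> .
  show ?thesis by (rule markov)
qed

end
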